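(* Let $H$ be a separable complex Hilbert space and $T$ a power-bounded recurrent bounded operator on $H$. Then $T$ is hyper-recurrent and $\mathrm{Hr}(T)$ is dense in $H$.
   Context: $T$ is power-bounded if $\sup_n\|T^n\|<\infty$. $x$ is recurrent if $T^{\omega_n}x\to x$ for some strictly increasing sequence $(\omega_n)$ of positive integers; $\mathrm{Rec}(T)$ is the set of recurrent vectors and $T$ is recurrent if $\mathrm{Rec}(T)$ is dense. $\mathfrak{C}$ is the set of strictly increasing sequences $\omega$ with $T^{\omega_n}x\to x$ for some $x\ne0$; $\mathfrak{L}(\omega)=\{x:T^{\omega_n}x\to x\}$. $\mathrm{Hr}(T)$ is the set of $x\in\mathrm{Rec}(T)$ such that $\mathfrak{L}(\omega)$ is dense for every $\omega\in\mathfrak{C}$ with $x\in\mathfrak{L}(\omega)$; a recurrent $T$ is hyper-recurrent if $\mathrm{Hr}(T)\ne\emptyset$. *)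

theory Defs
  imports "HOL-Analysis.Analysis"
begin

text \<open>A complex Hilbert space: a Banach space (over the reals, via the type class)
  equipped with a complex scalar multiplication sc extending the real one and a
  complex inner product ip inducing the norm.\<close>

definition complex_hilbert :: "(complex \<Rightarrow> 'a::banach \<Rightarrow> 'a) \<Rightarrow> ('a \<Rightarrow> 'a \<Rightarrow> complex) \<Rightarrow> bool" where
  "complex_hilbert sc ip \<longleftrightarrow>
     (\<forall>r x. sc (complex_of_real r) x = r *\<^sub>R x) \<and>
     (\<forall>a b x. sc (a * b) x = sc a (sc b x)) \<and>
     (\<forall>a b x. sc (a + b) x = sc a x + sc b x) \<and>
     (\<forall>a x y. sc a (x + y) = sc a x + sc a y) \<and>
     (\<forall>x y z. ip (x + y) z = ip x z + ip y z) \<and>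
     (\<forall>a x y. ip (sc a x) y = a * ip x y) \<and>
     (\<forall>x y. ip y x = cnj (ip x y)) \<and>
     (\<forall>x. ip x x \<in> \<real> \<and> Re (ip x x) \<ge> 0) \<and>
     (\<forall>x. ip x x = 0 \<longrightarrow> x = 0) \<and>
     (\<forall>x. norm x = sqrt (Re (ip x x)))"

definition separable_type :: "'a::topological_space itself \<Rightarrow> bool" where
  "separable_type _ \<longleftrightarrow> (\<exists>D::'a set. countable D \<and> closure D = UNIV)"

definition complex_bounded_operator :: "(complex \<Rightarrow> 'a::real_normed_vector \<Rightarrow> 'a) \<Rightarrow> ('a \<Rightarrow> 'a) \<Rightarrow> bool" where
  "complex_bounded_operator sc T \<longleftrightarrow> bounded_linear T \<and> (\<forall>a x. T (sc a x) = sc a (T x))"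

definition power_bounded :: "('a::real_normed_vector \<Rightarrow> 'a) \<Rightarrow> bool" where
  "power_bounded T \<longleftrightarrow> (\<exists>M. \<forall>n. onorm (T ^^ n) \<le> M)"

definition admissible_seq :: "(nat \<Rightarrow> nat) \<Rightarrow> bool" where
  "admissible_seq \<omega> \<longleftrightarrow> strict_mono \<omega> \<and> (\<forall>n. 0 < \<omega> n)"

definition Lset :: "('a::topological_space \<Rightarrow> 'a) \<Rightarrow> (nat \<Rightarrow> nat) \<Rightarrow> 'a set" where
  "Lset T \<omega> = {x. (\<lambda>n. (T ^^ \<omega> n) x) \<longlonglongrightarrow> x}"

definition Rec :: "('a::topological_space \<Rightarrow> 'a) \<Rightarrow> 'a set" where
  "Rec T = {x. \<exists>\<omega>. admissible_seq \<omega> \<and> x \<in> Lset T \<omega>}"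

definition recurrent :: "('a::topological_space \<Rightarrow> 'a) \<Rightarrow> bool" where
  "recurrent T \<longleftrightarrow> closure (Rec T) = UNIV"

definition Cset :: "('a::{topological_space,zero} \<Rightarrow> 'a) \<Rightarrow> (nat \<Rightarrow> nat) set" where
  "Cset T = {\<omega>. admissible_seq \<omega> \<and> (\<exists>x. x \<noteq> 0 \<and> x \<in> Lset T \<omega>)}"

definition Hr :: "('a::{topological_space,zero} \<Rightarrow> 'a) \<Rightarrow> 'a set" where
  "Hr T = {x \<in> Rec T. \<forall>\<omega> \<in> Cset T. x \<in> Lset T \<omega> \<longrightarrow> closure (Lset T \<omega>) = UNIV}"

definition hyper_recurrent :: "('a::{topological_space,zero} \<Rightarrow> 'a) \<Rightarrow> bool" where
  "hyper_recurrent T \<longleftrightarrow> recurrent T \<and> Hr T \<noteq> {}"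

end

theory Submission
  imports Defs
begin


lemma quad_nonneg_zero:
  fixes a b :: real
  assumes "\<And>t. 0 \<le> a * t + b * t^2"
  shows "a = 0"
proof (rule ccontr)
  assume a: "a \<noteq> 0"
  have "b \<ge> 0" using assms[of 1] assms[of "-1"] by simp
  define t where "t = - a / (2 * (\<bar>b\<bar> + \<bar>a\<bar>))"
  have den: "\<bar>b\<bar> + \<bar>a\<bar> > 0" using a by simp
  have "a * t + b * t^2 = t * (a + b * t)" by (simp add: power2_eq_square algebra_simps)
  also have "\<dots> < 0"
  proof -
    have "b * \<bar>t\<bar> \<le> (\<bar>b\<bar> + \<bar>a\<bar>) * \<bar>t\<bar>" using \<open>b\<ge>0\<close> by (intro mult_right_mono) auto
    also have "\<dots> = \<bar>a\<bar>/2"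
    proof -
      have "\<bar>t\<bar> = \<bar>a\<bar> / (2 * (\<bar>b\<bar> + \<bar>a\<bar>))" using den by (simp add: t_def abs_divide abs_mult)
      then show ?thesis using den by (simp add: field_simps)
    qed
    finally have bt: "\<bar>b * t\<bar> \<le> \<bar>a\<bar>/2" using \<open>b\<ge>0\<close> by (simp add: abs_mult)
    show ?thesis
    proof (cases "a > 0")
      case True
      then have "t < 0" using den by (simp add: t_def field_simps)
      moreover have "a + b * t > 0" using bt True by linarith
      ultimately show ?thesis by (simp add: mult_neg_pos)
    next
      case False
      then have "a < 0" using a by simp
      then have "t > 0" using den by (simp add: t_def field_simps)
      moreover have "a + b * t < 0" using bt \<open>a<0\<close> by linarith
      ultimately show ?thesis by (simp add: mult_pos_neg)
    qed
  qed
  finally show False using assms[of t] by simp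
qed

locale symform =
  fixes B :: "'a::real_vector \<Rightarrow> 'a \<Rightarrow> real"
  assumes add1: "B (x + y) z = B x z + B y z"
    and scale1: "B (r *\<^sub>R x) y = r * B x y"
    and sym: "B x y = B y x"
    and pos: "B x x \<ge> 0"
begin

lemma add2: "B x (y + z) = B x y + B x z"
  using add1 sym by metis
lemma scale2: "B x (r *\<^sub>R y) = r * B x y"
  using scale1 sym by metis
lemma zero1[simp]: "B 0 y = 0"
  using scale1[of 0 y y] by simp
lemma zero2[simp]: "B y 0 = 0"
  using sym zero1 by metis
lemma minus1: "B (- x) y = - B x y"
  using scale1[of "-1" x y] by simp
lemma minus2: "B y (- x) = - B y x"
  using scale2[of y "-1" x] by simp
lemma diff1: "B (x - y) z = B x z - B y z"
  using add1[of x "-y" z] minus1 by simp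
lemma diff2: "B z (x - y) = B z x - B z y"
  using add2[of z x "-y"] minus2 by simp

lemma expand: "B (x + t *\<^sub>R y) (x + t *\<^sub>R y) = B x x + 2 * t * B x y + t^2 * B y y"
  by (simp add: add1 add2 scale1 scale2 sym[of y x] power2_eq_square algebra_simps)

lemma cs: "(B x y)^2 \<le> B x x * B y y"
proof (cases "B y y = 0")
  case True
  have "B x y = 0"
  proof (rule ccontr)
    assume nz: "B x y \<noteq> 0"
    define s where "s = - (B x x + 1) / (2 * B x y)"
    have "0 \<le> B (x + s *\<^sub>R y) (x + s *\<^sub>R y)" using pos by blast
    also have "\<dots> = B x x + 2 * s * B x y" using expand[of x s y] True by simp
    also have "2 * s * B x y = - (B x x + 1)" using nz by (simp add: s_def field_simps)
    finally show False by simp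
  qed
  then show ?thesis using True by simp
next
  case False
  then have p: "B y y > 0" using pos[of y] by simp
  define t where "t = - B x y / B y y"
  have "0 \<le> B (x + t *\<^sub>R y) (x + t *\<^sub>R y)" using pos by blast
  also have "\<dots> = B x x + 2 * t * B x y + t^2 * B y y" by (rule expand)
  also have "\<dots> = B x x - (B x y)^2 / B y y"
    using p by (simp add: t_def power2_eq_square field_simps)
  finally show ?thesis using p by (simp add: field_simps)
qed

lemma cs_abs: "\<bar>B x y\<bar> \<le> sqrt (B x x) * sqrt (B y y)"
proof -
  have "\<bar>B x y\<bar> = sqrt ((B x y)^2)" by simp
  also have "\<dots> \<le> sqrt (B x x * B y y)" using cs by (rule real_sqrt_le_mono)
  finally show ?thesis by (simp add: real_sqrt_mult)
qed

definition nB where "nB x = sqrt (B x x)"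

lemma nB_nonneg: "nB x \<ge> 0" using pos[of x] by (simp add: nB_def)
lemma nB_sq: "(nB x)^2 = B x x" using pos[of x] by (simp add: nB_def)

lemma nB_triangle: "nB (x + y) \<le> nB x + nB y"
proof -
  have "(nB (x+y))^2 = B x x + 2 * B x y + B y y"
    using expand[of x 1 y] nB_sq by simp
  also have "\<dots> \<le> (nB x)^2 + 2 * (nB x * nB y) + (nB y)^2"
  proof -
    have "B x y \<le> nB x * nB y" using cs_abs[of x y] unfolding nB_def by simp
    then show ?thesis by (simp add: nB_sq)
  qed
  also have "\<dots> = (nB x + nB y)^2" by (simp add: power2_eq_square algebra_simps)
  finally show ?thesis using nB_nonneg by (meson power2_le_imp_le add_nonneg_nonneg)
qed

lemma nB_scale: "nB (r *\<^sub>R x) = \<bar>r\<bar> * nB x"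
proof -
  have "B (r *\<^sub>R x) (r *\<^sub>R x) = r^2 * B x x" by (simp add: scale1 scale2 power2_eq_square)
  then show ?thesis by (simp add: nB_def real_sqrt_mult)
qed

end



lemma cluster_point:
  fixes F :: "nat \<Rightarrow> 'i \<Rightarrow> real" and b :: "'i \<Rightarrow> real"
  assumes Fb: "\<And>n i. \<bar>F n i\<bar> \<le> b i"
  shows "\<exists>L. (\<forall>i. \<bar>L i\<bar> \<le> b i) \<and>
    (\<forall>J \<epsilon> N. finite J \<longrightarrow> \<epsilon> > 0 \<longrightarrow> (\<exists>n\<ge>N. \<forall>j\<in>J. \<bar>F n j - L j\<bar> < \<epsilon>))"
proof -
  define X where "X = product_topology (\<lambda>_. euclideanreal) (UNIV::'i set)"
  define S where "S = PiE UNIV (\<lambda>i. {-b i..b i})"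
  have topX: "topspace X = UNIV" by (simp add: X_def PiE_UNIV_domain)
  have comp: "compactin X S"
    unfolding X_def S_def by (subst compactin_PiE) auto
  have FS: "F n \<in> S" for n
  proof -
    have "F n i \<in> {-b i..b i}" for i using Fb[of n i] by (auto simp: abs_le_iff)
    then show ?thesis by (auto simp: S_def PiE_UNIV_domain)
  qed
  define U where "U = range (\<lambda>N. X closure_of (F ` {N..}))"
  have fip: "\<And>U. (\<forall>C\<in>U. closedin X C) \<and> (\<forall>\<F>. finite \<F> \<and> \<F> \<subseteq> U \<longrightarrow> S \<inter> \<Inter>\<F> \<noteq> {}) \<longrightarrow> S \<inter> \<Inter>U \<noteq> {}"
    using comp unfolding compactin_fip by blast
  have c1: "\<forall>C\<in>U. closedin X C" by (auto simp: U_def)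
  have c2: "\<forall>\<F>. finite \<F> \<and> \<F> \<subseteq> U \<longrightarrow> S \<inter> \<Inter> \<F> \<noteq> {}"
    proof (intro allI impI)
      fix \<F> assume "finite \<F> \<and> \<F> \<subseteq> U"
      then obtain A where A: "finite A" "\<F> = (\<lambda>N. X closure_of (F ` {N..})) ` A"
        unfolding U_def by (meson finite_subset_image)
      define m where "m = Max (insert 0 A)"
      have "F m \<in> \<Inter>\<F>"
      proof
        fix C assume "C \<in> \<F>"
        then obtain N where N: "N \<in> A" "C = X closure_of (F ` {N..})" using A by auto
        have "N \<le> m" using N A by (simp add: m_def)
        then have "F m \<in> F ` {N..}" by auto
        then show "F m \<in> C" using N closure_of_subset[of "F ` {N..}" X] topX by auto
      qed
      then show "S \<inter> \<Inter> \<F> \<noteq> {}" using FS by auto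
    qed
  have "S \<inter> \<Inter>U \<noteq> {}" using fip[of U] c1 c2 by blast
  then obtain L where L: "L \<in> S" "L \<in> \<Inter>U" by auto
  have opn: "openin X {f \<in> topspace X. \<forall>j\<in>J. \<bar>f j - L j\<bar> < \<epsilon>}" if "finite J" for J \<epsilon>
    using that
  proof (induction J rule: finite_induct)
    case empty then show ?case by simp
  next
    case (insert j J)
    have o1: "openin X {f \<in> topspace X. f j \<in> ball (L j) \<epsilon>}"
      unfolding X_def
      by (rule openin_continuous_map_preimage[OF continuous_map_product_projection]) (auto simp: open_openin[symmetric])
    have eq: "{f \<in> topspace X. \<forall>i\<in>insert j J. \<bar>f i - L i\<bar> < \<epsilon>}
       = {f \<in> topspace X. f j \<in> ball (L j) \<epsilon>} \<inter> {f \<in> topspace X. \<forall>i\<in>J. \<bar>f i - L i\<bar> < \<epsilon>}"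
      by (auto simp: dist_real_def abs_minus_commute)
    show ?case unfolding eq using o1 insert.IH by (rule openin_Int)
  qed
  show ?thesis
  proof (intro exI[of _ L] conjI allI impI)
    show "\<bar>L i\<bar> \<le> b i" for i
    proof -
      have "L i \<in> {-b i..b i}" using L(1) unfolding S_def PiE_UNIV_domain Pi_iff by blast
      then show ?thesis by (auto simp: abs_le_iff)
    qed
  next
    fix J :: "'i set" and \<epsilon> :: real and N :: nat
    assume J: "finite J" "\<epsilon> > 0"
    define W where "W = {f \<in> topspace X. \<forall>j\<in>J. \<bar>f j - L j\<bar> < \<epsilon>}"
    have "L \<in> X closure_of (F ` {N..})" using L(2) by (auto simp: U_def)
    then have cl: "\<And>T. L \<in> T \<Longrightarrow> openin X T \<Longrightarrow> (\<exists>y. y \<in> F ` {N..} \<and> y \<in> T)"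
      unfolding in_closure_of by blast
    have "L \<in> W" using J topX by (auto simp: W_def)
    moreover have "openin X W" unfolding W_def by (rule opn[OF J(1)])
    ultimately obtain g where "g \<in> F ` {N..}" "g \<in> W" using cl by blast
    then show "\<exists>n\<ge>N. \<forall>j\<in>J. \<bar>F n j - L j\<bar> < \<epsilon>" by (auto simp: W_def)
  qed
qed



locale pbr =
  fixes g :: "'a::banach \<Rightarrow> 'a \<Rightarrow> real" and T :: "'a \<Rightarrow> 'a" and M :: real
  assumes g_add: "g (x + y) z = g x z + g y z"
    and g_scale: "g (r *\<^sub>R x) y = r * g x y"
    and g_sym: "g x y = g y x"
    and g_norm: "g x x = (norm x)^2"
    and T_bl: "bounded_linear T"
    and M1: "M \<ge> 1"
    and Mb: "norm ((T^^n) x) \<le> M * norm x"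
    and rec_dense: "closure (Rec T) = UNIV"
begin

sublocale G: symform g
  by unfold_locales (rule g_add, rule g_scale, rule g_sym, simp add: g_norm)

lemma Tn_bl: "bounded_linear (T^^n)"
  by (induction n) (auto simp: bounded_linear_ident[unfolded id_def] intro: bounded_linear_compose[OF T_bl])

lemma Tn_diff: "(T^^n) (x - y) = (T^^n) x - (T^^n) y"
  using Tn_bl[of n] by (simp add: linear_simps)
lemma Tn_add: "(T^^n) (x + y) = (T^^n) x + (T^^n) y"
  using Tn_bl[of n] by (simp add: linear_simps)
lemma Tn_scale: "(T^^n) (r *\<^sub>R x) = r *\<^sub>R (T^^n) x"
  using Tn_bl[of n] by (simp add: linear_simps)

lemma Tn_comp: "(T^^m) ((T^^n) x) = (T^^(m+n)) x"
  by (simp add: funpow_add)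

lemma g_bound: "\<bar>g x y\<bar> \<le> norm x * norm y"
  using G.cs_abs[of x y] by (simp add: g_norm)

lemma rec_freq:
  assumes "x \<in> Rec T" "\<epsilon> > 0"
  shows "\<exists>n\<ge>N. n > 0 \<and> norm ((T^^n) x - x) < \<epsilon>"
proof -
  obtain \<omega> where w: "admissible_seq \<omega>" "(\<lambda>n. (T ^^ \<omega> n) x) \<longlonglongrightarrow> x"
    using assms(1) by (auto simp: Rec_def Lset_def)
  then obtain K where K: "\<And>k. k \<ge> K \<Longrightarrow> norm ((T ^^ \<omega> k) x - x) < \<epsilon>"
    using assms(2) by (metis LIMSEQ_D)
  have sm: "strict_mono \<omega>" "\<And>n. 0 < \<omega> n" using w(1) by (auto simp: admissible_seq_def)
  let ?k = "max K N"
  have "\<omega> ?k \<ge> ?k" using sm(1) by (rule strict_mono_imp_increasing)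
  then show ?thesis using K[of ?k] sm(2)[of ?k] by (intro exI[of _ "\<omega> ?k"]) auto
qed

lemma freq_rec:
  assumes "\<And>\<epsilon> N. \<epsilon> > 0 \<Longrightarrow> \<exists>n\<ge>N. n > 0 \<and> norm ((T^^n) x - x) < \<epsilon>"
  shows "x \<in> Rec T"
proof -
  define pick where "pick N e = (SOME n. n \<ge> N \<and> n > 0 \<and> norm ((T^^n) x - x) < e)" for N :: nat and e :: real
  have pick: "pick N e \<ge> N \<and> pick N e > 0 \<and> norm ((T^^pick N e) x - x) < e" if "e > 0" for N e
    unfolding pick_def by (rule someI_ex) (use assms that in blast)
  define \<omega> where "\<omega> = rec_nat (pick 1 1) (\<lambda>k w. pick (Suc w) (1 / (real k + 2)))"
  have w0: "\<omega> 0 = pick 1 1" and wS: "\<omega> (Suc k) = pick (Suc (\<omega> k)) (1 / (real k + 2))" for k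
    by (simp_all add: \<omega>_def)
  have bnd: "norm ((T^^\<omega> k) x - x) < 1 / (real k + 1)" for k
  proof (cases k)
    case 0 then show ?thesis using pick[of 1 1] by (simp add: w0)
  next
    case (Suc j)
    have "1 / (real j + 2) > 0" by simp
    from pick[OF this, of "Suc (\<omega> j)"] have A: "norm ((T^^\<omega> (Suc j)) x - x) < 1 / (real j + 2)"
      unfolding wS by blast
    have E: "1 / (real (Suc j) + 1) = 1 / (real j + 2)" by simp
    show ?thesis using A unfolding Suc E .
  qed
  have pos: "\<omega> k > 0" for k
    by (cases k) (use pick in \<open>auto simp: w0 wS\<close>)
  have sm: "strict_mono \<omega>"
  proof (rule strict_monoI_Suc)
    fix k show "\<omega> k < \<omega> (Suc k)" using pick[of "1 / (real k + 2)" "Suc (\<omega> k)"] by (simp add: wS)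
  qed
  have lim: "(\<lambda>k. (T^^\<omega> k) x) \<longlonglongrightarrow> x"
  proof (rule LIMSEQ_I)
    fix r :: real assume "r > 0"
    then obtain N where N: "N > 0" "inverse (real N) < r" using ex_inverse_of_nat_less by blast
    show "\<exists>no. \<forall>k\<ge>no. norm ((T ^^ \<omega> k) x - x) < r"
    proof (intro exI allI impI)
      fix k assume "k \<ge> N"
      have "1 / (real k + 1) \<le> inverse (real N)" using \<open>k \<ge> N\<close> N(1) by (simp add: field_simps)
      then show "norm ((T ^^ \<omega> k) x - x) < r" using bnd[of k] N(2) by linarith
    qed
  qed
  show ?thesis unfolding Rec_def Lset_def admissible_seq_def using sm pos lim by blast
qed

lemma Rec_UNIV: "x \<in> Rec T"
proof (rule freq_rec)
  fix \<epsilon> :: real and N :: nat assume e: "\<epsilon> > 0"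
  have "x \<in> closure (Rec T)" using rec_dense by simp
  moreover have "\<epsilon> / (2 * (M + 1)) > 0" using e M1 by simp
  ultimately obtain s where s: "s \<in> Rec T" "dist s x < \<epsilon> / (2 * (M + 1))"
    unfolding closure_approachable by blast
  obtain n where n: "n \<ge> N" "n > 0" "norm ((T^^n) s - s) < \<epsilon>/2" using rec_freq[OF s(1), of "\<epsilon>/2" N] e by auto
  have eq: "(T^^n) x - x = (T^^n) (x - s) + ((T^^n) s - s) + (s - x)" by (simp add: Tn_diff)
  have "norm ((T^^n) x - x) \<le> norm ((T^^n) (x - s)) + norm ((T^^n) s - s) + norm (s - x)"
    unfolding eq using norm_triangle_ineq[of "(T^^n) (x - s) + ((T^^n) s - s)" "s - x"]
      norm_triangle_ineq[of "(T^^n) (x - s)" "(T^^n) s - s"] by linarith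
  also have "\<dots> \<le> M * norm (x - s) + norm ((T^^n) s - s) + norm (s - x)" using Mb by simp
  also have "\<dots> = (M + 1) * dist s x + norm ((T^^n) s - s)" by (simp add: dist_norm norm_minus_commute algebra_simps)
  also have "\<dots> < (M + 1) * (\<epsilon> / (2 * (M + 1))) + \<epsilon>/2"
    using s(2) n(3) M1 by (intro add_less_le_mono mult_strict_left_mono) auto
  also have "\<dots> = \<epsilon>" using M1 by (simp add: field_simps)
  finally show "\<exists>n\<ge>N. n > 0 \<and> norm ((T^^n) x - x) < \<epsilon>" using n by blast
qed

lemma lower: "norm x \<le> M * norm ((T^^n) x)"
proof (rule field_le_epsilon)
  fix e :: real assume "e > 0"
  obtain m where m: "m \<ge> n" "norm ((T^^m) x - x) < e" using rec_freq[OF Rec_UNIV \<open>e>0\<close>, of n] by auto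
  have "(T^^m) x = (T^^(m-n)) ((T^^n) x)" using m(1) by (simp add: Tn_comp)
  then have "norm ((T^^m) x) \<le> M * norm ((T^^n) x)" using Mb[of "m-n" "(T^^n) x"] by simp
  moreover have "norm x \<le> norm ((T^^m) x) + norm ((T^^m) x - x)"
    using norm_triangle_sub[of x "(T^^m) x"] norm_minus_commute[of x "(T^^m) x"] by linarith
  ultimately show "norm x \<le> M * norm ((T ^^ n) x) + e" using m(2) by linarith
qed

lemma lower1: "norm x \<le> M * norm (T x)"
  using lower[of x 1] by simp

end



lemma cluster_lin:
  fixes F :: "nat \<Rightarrow> 'i \<Rightarrow> real"
  assumes cl: "\<forall>J \<epsilon> N. finite J \<longrightarrow> \<epsilon> > 0 \<longrightarrow> (\<exists>n\<ge>N. \<forall>j\<in>J. \<bar>F n j - L j\<bar> < \<epsilon>)"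
    and h: "\<And>n. n \<ge> NN \<Longrightarrow> \<bar>a1 * F n j1 + a2 * F n j2 + a3 * F n j3 - c\<bar> \<le> d"
  shows "\<bar>a1 * L j1 + a2 * L j2 + a3 * L j3 - c\<bar> \<le> d"
proof (rule field_le_epsilon)
  fix e :: real assume e: "e > 0"
  define S where "S = \<bar>a1\<bar> + \<bar>a2\<bar> + \<bar>a3\<bar> + 1"
  have S: "S > 0" by (simp add: S_def add_nonneg_pos)
  obtain n where n: "n \<ge> NN" "\<forall>j\<in>{j1,j2,j3}. \<bar>F n j - L j\<bar> < e / S"
    using cl[rule_format, of "{j1,j2,j3}" "e / S" NN] e S by auto
  have d1: "\<bar>a1 * (L j1 - F n j1)\<bar> \<le> \<bar>a1\<bar> * (e / S)"
  proof -
    have "\<bar>L j1 - F n j1\<bar> \<le> e / S" using n(2) by (auto simp: abs_minus_commute)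
    then have "\<bar>a1\<bar> * \<bar>L j1 - F n j1\<bar> \<le> \<bar>a1\<bar> * (e / S)" by (rule mult_left_mono) simp
    then show ?thesis by (simp only: abs_mult)
  qed
  have d2: "\<bar>a2 * (L j2 - F n j2)\<bar> \<le> \<bar>a2\<bar> * (e / S)"
  proof -
    have "\<bar>L j2 - F n j2\<bar> \<le> e / S" using n(2) by (auto simp: abs_minus_commute)
    then have "\<bar>a2\<bar> * \<bar>L j2 - F n j2\<bar> \<le> \<bar>a2\<bar> * (e / S)" by (rule mult_left_mono) simp
    then show ?thesis by (simp only: abs_mult)
  qed
  have d3: "\<bar>a3 * (L j3 - F n j3)\<bar> \<le> \<bar>a3\<bar> * (e / S)"
  proof -
    have "\<bar>L j3 - F n j3\<bar> \<le> e / S" using n(2) by (auto simp: abs_minus_commute)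
    then have "\<bar>a3\<bar> * \<bar>L j3 - F n j3\<bar> \<le> \<bar>a3\<bar> * (e / S)" by (rule mult_left_mono) simp
    then show ?thesis by (simp only: abs_mult)
  qed
  have "(\<bar>a1\<bar> + \<bar>a2\<bar> + \<bar>a3\<bar>) * (e / S) \<le> e"
    using S e by (simp add: S_def field_simps)
  moreover have "a1 * L j1 + a2 * L j2 + a3 * L j3 - c = (a1 * F n j1 + a2 * F n j2 + a3 * F n j3 - c)
     + a1 * (L j1 - F n j1) + a2 * (L j2 - F n j2) + a3 * (L j3 - F n j3)" by (simp add: algebra_simps)
  ultimately show "\<bar>a1 * L j1 + a2 * L j2 + a3 * L j3 - c\<bar> \<le> d + e"
    using h[OF n(1)] d1 d2 d3
      abs_triangle_ineq[of "a1 * F n j1 + a2 * F n j2 + a3 * F n j3 - c + a1 * (L j1 - F n j1) + a2 * (L j2 - F n j2)" "a3 * (L j3 - F n j3)"]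
      abs_triangle_ineq[of "a1 * F n j1 + a2 * F n j2 + a3 * F n j3 - c + a1 * (L j1 - F n j1)" "a2 * (L j2 - F n j2)"]
      abs_triangle_ineq[of "a1 * F n j1 + a2 * F n j2 + a3 * F n j3 - c" "a1 * (L j1 - F n j1)"]
    by (simp only: distrib_right)
qed

lemma cluster_ge:
  fixes F :: "nat \<Rightarrow> 'i \<Rightarrow> real"
  assumes cl: "\<forall>J \<epsilon> N. finite J \<longrightarrow> \<epsilon> > 0 \<longrightarrow> (\<exists>n\<ge>N. \<forall>j\<in>J. \<bar>F n j - L j\<bar> < \<epsilon>)"
    and h: "\<And>n. F n j \<ge> c"
  shows "L j \<ge> c"
proof (rule ccontr)
  assume "\<not> L j \<ge> c"
  then have "c - L j > 0" by simp
  then obtain n where "\<forall>i\<in>{j}. \<bar>F n i - L i\<bar> < c - L j"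
    using cl[rule_format, of "{j}" "c - L j" 0] by auto
  then show False using h[of n] by auto
qed

context pbr
begin

sublocale T: bounded_linear T by (rule T_bl)

lemma T_inj: "inj T"
proof (rule injI)
  fix x y assume "T x = T y"
  then have "norm (x - y) \<le> 0" using lower1[of "x - y"] by (simp add: T.diff)
  then show "x = y" by simp
qed

lemma range_closed: "closed (range T)"
proof (unfold closed_sequential_limits, intro allI impI)
  fix s l assume a: "(\<forall>n. s n \<in> range T) \<and> s \<longlonglongrightarrow> l"
  define u where "u n = inv T (s n)" for n
  have u: "s n = T (u n)" for n using a unfolding u_def by (metis f_inv_into_f)
  have "Cauchy s" using a LIMSEQ_imp_Cauchy by blast
  have "Cauchy u"
  proof (unfold Cauchy_def, intro allI impI)
    fix e :: real assume e: "e > 0"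
    have "e / M > 0" using e M1 by simp
    then obtain N where N: "\<forall>m\<ge>N. \<forall>n\<ge>N. dist (s m) (s n) < e / M"
      using \<open>Cauchy s\<close> unfolding Cauchy_def by blast
    show "\<exists>N. \<forall>m\<ge>N. \<forall>n\<ge>N. dist (u m) (u n) < e"
    proof (intro exI allI impI)
      fix m n assume mn: "m \<ge> N" "n \<ge> N"
      have "dist (u m) (u n) \<le> M * dist (s m) (s n)"
        using lower1[of "u m - u n"] by (simp add: dist_norm u T.diff)
      also have "\<dots> < M * (e / M)" using N mn M1 by (intro mult_strict_left_mono) auto
      also have "\<dots> = e" using M1 by simp
      finally show "dist (u m) (u n) < e" .
    qed
  qed
  then obtain v where "u \<longlonglongrightarrow> v" using Cauchy_convergent convergent_def by blast
  then have "(\<lambda>n. T (u n)) \<longlonglongrightarrow> T v" by (rule T.tendsto)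
  moreover have "s = (\<lambda>n. T (u n))" using u by (rule ext)
  ultimately have "s \<longlonglongrightarrow> T v" by simp
  then have "l = T v" using a LIMSEQ_unique by blast
  then show "l \<in> range T" by simp
qed

lemma T_surj: "surj T"
proof -
  have "z \<in> closure (range T)" for z
  proof (unfold closure_approachable, intro allI impI)
    fix e :: real assume "e > 0"
    obtain n where n: "n > 0" "norm ((T^^n) z - z) < e" using rec_freq[OF Rec_UNIV \<open>e>0\<close>, of 0] by auto
    have "(T^^n) z = (T^^(Suc (n-1))) z" using n(1) by simp
    then have "(T^^n) z = T ((T^^(n-1)) z)" by simp
    then show "\<exists>y\<in>range T. dist y z < e" using n(2) by (auto simp: dist_norm)
  qed
  then show ?thesis using range_closed closure_closed[of "range T"] by auto
qed

definition Ti where "Ti = inv T"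

lemma T_Ti[simp]: "T (Ti x) = x" unfolding Ti_def using T_surj by (simp add: surj_f_inv_f)
lemma Ti_T[simp]: "Ti (T x) = x" unfolding Ti_def using T_inj by simp

lemma Ti_bl: "bounded_linear Ti"
proof (rule bounded_linear_intro[where K = M])
  fix x y show "Ti (x + y) = Ti x + Ti y"
    using T_inj by (metis T_Ti T.add injD)
next
  fix r x show "Ti (r *\<^sub>R x) = r *\<^sub>R Ti x"
    using T_inj by (metis T_Ti T.scaleR injD)
next
  fix x show "norm (Ti x) \<le> norm x * M" using lower1[of "Ti x"] by (simp add: mult.commute)
qed

end



context pbr
begin

definition Fc :: "nat \<Rightarrow> 'a \<times> 'a \<Rightarrow> real" where
  "Fc n p = (\<Sum>k\<le>n. g ((T^^k) (fst p)) ((T^^k) (snd p))) / (real n + 1)"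

lemma Fc_bound: "\<bar>Fc n p\<bar> \<le> M^2 * norm (fst p) * norm (snd p)"
proof -
  have "\<bar>\<Sum>k\<le>n. g ((T^^k) (fst p)) ((T^^k) (snd p))\<bar> \<le> (\<Sum>k\<le>n. \<bar>g ((T^^k) (fst p)) ((T^^k) (snd p))\<bar>)"
    by (rule sum_abs)
  also have "\<dots> \<le> (\<Sum>k\<le>n. M^2 * norm (fst p) * norm (snd p))"
  proof (rule sum_mono)
    fix k
    have "\<bar>g ((T^^k) (fst p)) ((T^^k) (snd p))\<bar> \<le> norm ((T^^k) (fst p)) * norm ((T^^k) (snd p))"
      by (rule g_bound)
    also have "\<dots> \<le> (M * norm (fst p)) * (M * norm (snd p))"
      by (intro mult_mono Mb) (use M1 in auto)
    finally show "\<bar>g ((T^^k) (fst p)) ((T^^k) (snd p))\<bar> \<le> M^2 * norm (fst p) * norm (snd p)"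
      by (simp add: power2_eq_square algebra_simps)
  qed
  also have "\<dots> = (real n + 1) * (M^2 * norm (fst p) * norm (snd p))" by simp
  finally show ?thesis by (simp add: Fc_def abs_divide field_simps)
qed

definition Lc where "Lc = (SOME L. (\<forall>i. \<bar>L i\<bar> \<le> M^2 * norm (fst i) * norm (snd i)) \<and>
    (\<forall>J \<epsilon> N. finite J \<longrightarrow> \<epsilon> > 0 \<longrightarrow> (\<exists>n\<ge>N. \<forall>j\<in>J. \<bar>Fc n j - L j\<bar> < \<epsilon>)))"

lemma Lc: "\<bar>Lc i\<bar> \<le> M^2 * norm (fst i) * norm (snd i)"
  and Lc_cl: "\<forall>J \<epsilon> N. finite J \<longrightarrow> \<epsilon> > 0 \<longrightarrow> (\<exists>n\<ge>N. \<forall>j\<in>J. \<bar>Fc n j - Lc j\<bar> < \<epsilon>)"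
proof -
  have "\<exists>L. (\<forall>i. \<bar>L i\<bar> \<le> M^2 * norm (fst i) * norm (snd i)) \<and>
    (\<forall>J \<epsilon> N. finite J \<longrightarrow> \<epsilon> > 0 \<longrightarrow> (\<exists>n\<ge>N. \<forall>j\<in>J. \<bar>Fc n j - L j\<bar> < \<epsilon>))"
    by (rule cluster_point) (rule Fc_bound)
  then have "(\<forall>i. \<bar>Lc i\<bar> \<le> M^2 * norm (fst i) * norm (snd i)) \<and>
    (\<forall>J \<epsilon> N. finite J \<longrightarrow> \<epsilon> > 0 \<longrightarrow> (\<exists>n\<ge>N. \<forall>j\<in>J. \<bar>Fc n j - Lc j\<bar> < \<epsilon>))"
    unfolding Lc_def by (rule someI_ex)
  then show "\<bar>Lc i\<bar> \<le> M^2 * norm (fst i) * norm (snd i)"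
    and "\<forall>J \<epsilon> N. finite J \<longrightarrow> \<epsilon> > 0 \<longrightarrow> (\<exists>n\<ge>N. \<forall>j\<in>J. \<bar>Fc n j - Lc j\<bar> < \<epsilon>)" by blast+
qed

definition B where "B x y = Lc (x, y)"

lemma Fc_add: "Fc n (x + x', y) = Fc n (x, y) + Fc n (x', y)"
  by (simp add: Fc_def Tn_add g_add sum.distrib add_divide_distrib)

lemma Fc_scale: "Fc n (r *\<^sub>R x, y) = r * Fc n (x, y)"
  by (simp add: Fc_def Tn_scale g_scale sum_distrib_left)

lemma Fc_sym: "Fc n (x, y) = Fc n (y, x)"
  by (simp add: Fc_def g_sym)

lemma Fc_shift: "\<bar>Fc n (T x, T y) - Fc n (x, y)\<bar> \<le> 2 * M^2 * norm x * norm y / (real n + 1)"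
proof -
  define a where "a k = g ((T^^k) x) ((T^^k) y)" for k
  have sh: "(\<Sum>k\<le>n. g ((T^^k) (T x)) ((T^^k) (T y))) = (\<Sum>k\<le>n. a (Suc k))"
    by (simp add: a_def funpow_swap1)
  have tel: "(\<Sum>k\<le>n. a (Suc k)) - (\<Sum>k\<le>n. a k) = a (Suc n) - a 0"
    by (induction n) auto
  have "Fc n (T x, T y) - Fc n (x, y) = (a (Suc n) - a 0) / (real n + 1)"
    unfolding Fc_def fst_conv snd_conv sh using tel by (simp add: a_def diff_divide_distrib[symmetric])
  moreover have "\<bar>a (Suc n) - a 0\<bar> \<le> 2 * M^2 * norm x * norm y"
  proof -
    have "\<bar>a (Suc n)\<bar> \<le> M^2 * norm x * norm y"
    proof -
      have "\<bar>a (Suc n)\<bar> \<le> norm ((T^^Suc n) x) * norm ((T^^Suc n) y)" unfolding a_def by (rule g_bound)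
      also have "\<dots> \<le> (M * norm x) * (M * norm y)" by (intro mult_mono Mb) (use M1 in auto)
      finally show ?thesis by (simp add: power2_eq_square algebra_simps)
    qed
    moreover have "\<bar>a 0\<bar> \<le> M^2 * norm x * norm y"
    proof -
      have "\<bar>a 0\<bar> \<le> norm x * norm y" unfolding a_def using g_bound by simp
      also have "\<dots> \<le> M^2 * (norm x * norm y)"
      proof -
        have "1 \<le> M^2" using M1 by (rule one_le_power)
        then have "1 * (norm x * norm y) \<le> M^2 * (norm x * norm y)" by (rule mult_right_mono) simp
        then show ?thesis by simp
      qed
      finally show ?thesis by (simp add: algebra_simps)
    qed
    ultimately show ?thesis by linarith
  qed
  ultimately show ?thesis by (simp add: abs_divide divide_right_mono)
qed

lemma Fc_low: "Fc n (x, x) \<ge> (norm x)^2 / M^2"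
proof -
  have "(\<Sum>k\<le>n. (norm x)^2 / M^2) \<le> (\<Sum>k\<le>n. g ((T^^k) x) ((T^^k) x))"
  proof (rule sum_mono)
    fix k
    have "norm x / M \<le> norm ((T^^k) x)" using lower[of x k] M1 by (simp add: field_simps)
    then have "(norm x / M)^2 \<le> (norm ((T^^k) x))^2" by (rule power_mono) (use M1 in simp)
    then show "(norm x)^2 / M^2 \<le> g ((T^^k) x) ((T^^k) x)" by (simp add: g_norm power_divide)
  qed
  then have "(real n + 1) * ((norm x)^2 / M^2) \<le> (\<Sum>k\<le>n. g ((T^^k) x) ((T^^k) x))" by (simp add: add.commute)
  then have "(norm x)^2 / M^2 \<le> (\<Sum>k\<le>n. g ((T^^k) x) ((T^^k) x)) / (real n + 1)"
    by (simp add: pos_le_divide_eq mult.commute)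
  then show ?thesis by (simp add: Fc_def)
qed

end



context symform
begin

lemma parallelogram: "B (u - v) (u - v) + B (u + v) (u + v) = 2 * B u u + 2 * B v v"
  by (simp add: add1 add2 diff1 diff2 sym[of v u] algebra_simps)

lemma orth_from_min:
  assumes "\<And>t. B w w \<le> B (w + t *\<^sub>R k) (w + t *\<^sub>R k)"
  shows "B w k = 0"
proof -
  have "\<And>t. 0 \<le> (2 * B w k) * t + B k k * t^2"
    using assms expand by (simp add: algebra_simps)
  then have "2 * B w k = 0" by (rule quad_nonneg_zero)
  then show ?thesis by simp
qed

end

context pbr
begin

lemma B_add: "B (x + x') y = B x y + B x' y"
proof -
  have "\<bar>1 * Lc (x + x', y) + (-1) * Lc (x, y) + (-1) * Lc (x', y) - 0\<bar> \<le> 0"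
    by (rule cluster_lin[OF Lc_cl, where NN=0]) (simp add: Fc_add)
  then show ?thesis by (simp add: B_def)
qed

lemma B_scale: "B (r *\<^sub>R x) y = r * B x y"
proof -
  have "\<bar>1 * Lc (r *\<^sub>R x, y) + (-r) * Lc (x, y) + 0 * Lc (x, y) - 0\<bar> \<le> 0"
    by (rule cluster_lin[OF Lc_cl, where NN=0]) (simp add: Fc_scale)
  then show ?thesis by (simp add: B_def)
qed

lemma B_sym: "B x y = B y x"
proof -
  have "\<bar>1 * Lc (x, y) + (-1) * Lc (y, x) + 0 * Lc (x, y) - 0\<bar> \<le> 0"
    by (rule cluster_lin[OF Lc_cl, where NN=0]) (simp add: Fc_sym[of _ x y])
  then show ?thesis by (simp add: B_def)
qed

lemma B_low: "B x x \<ge> (norm x)^2 / M^2"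
  unfolding B_def by (rule cluster_ge[OF Lc_cl]) (rule Fc_low)

lemma B_up: "B x x \<le> M^2 * (norm x)^2"
  using Lc[of "(x, x)"] by (simp add: B_def power2_eq_square algebra_simps)

lemma B_T: "B (T x) (T y) = B x y"
proof -
  define C where "C = 2 * M^2 * norm x * norm y"
  have C0: "C \<ge> 0" by (simp add: C_def)
  have "\<bar>1 * Lc (T x, T y) + (-1) * Lc (x, y) + 0 * Lc (x, y) - 0\<bar> \<le> d" if d: "d > 0" for d
  proof -
    obtain NN :: nat where NN: "C / d < real NN" using reals_Archimedean2 by blast
    show ?thesis
    proof (rule cluster_lin[OF Lc_cl, where NN=NN])
      fix n assume n: "n \<ge> NN"
      have "C < d * real NN" using NN d by (simp add: field_simps)
      also have "\<dots> \<le> d * (real n + 1)" using n d by (intro mult_left_mono) auto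
      finally have "C / (real n + 1) \<le> d" by (simp add: field_simps)
      then show "\<bar>1 * Fc n (T x, T y) + (-1) * Fc n (x, y) + 0 * Fc n (x, y) - 0\<bar> \<le> d"
        using Fc_shift[of n x y] by (simp add: C_def)
    qed
  qed
  then have "\<bar>Lc (T x, T y) - Lc (x, y)\<bar> \<le> 0 + d" if "d > 0" for d using that by simp
  then have "\<bar>Lc (T x, T y) - Lc (x, y)\<bar> \<le> 0" by (rule field_le_epsilon)
  then show ?thesis by (simp add: B_def)
qed

lemma B_Ti: "B (Ti x) (Ti y) = B x y"
  using B_T[of "Ti x" "Ti y"] by simp

lemma M2pos: "M^2 > 0" using M1 by simp

sublocale Bf: symform B
proof
  show "B (x + y) z = B x z + B y z" for x y z by (rule B_add)
  show "B (r *\<^sub>R x) y = r * B x y" for r x y by (rule B_scale)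
  show "B x y = B y x" for x y by (rule B_sym)
  show "0 \<le> B x x" for x using B_low[of x] M2pos by (smt (verit) divide_nonneg_pos zero_le_power2)
qed

lemma B_zero: "B x x = 0 \<Longrightarrow> x = 0"
  using B_low[of x] M2pos by (smt (verit) divide_pos_pos zero_less_norm_iff zero_less_power2)

lemma norm_le_nB: "norm x \<le> M * Bf.nB x"
proof -
  have "(norm x)^2 \<le> M^2 * B x x" using B_low[of x] M2pos by (simp add: field_simps)
  also have "\<dots> = (M * Bf.nB x)^2" by (simp add: power_mult_distrib Bf.nB_sq)
  finally show ?thesis using M1 Bf.nB_nonneg by (meson power2_le_imp_le mult_nonneg_nonneg order_trans zero_le_one)
qed

lemma nB_le_norm: "Bf.nB x \<le> M * norm x"
proof -
  have "(Bf.nB x)^2 \<le> (M * norm x)^2" using B_up[of x] by (simp add: Bf.nB_sq power_mult_distrib)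
  then show ?thesis using M1 by (meson power2_le_imp_le mult_nonneg_nonneg order_trans zero_le_one norm_ge_zero)
qed

end



context pbr
begin

lemma proj_exists:
  assumes K: "closed K" "subspace K"
  shows "\<exists>p\<in>K. \<forall>k\<in>K. B (z - p) k = 0"
proof -
  define D where "D = (\<lambda>k. Bf.nB (z - k)) ` K"
  define \<delta> where "\<delta> = Inf D"
  have K0: "0 \<in> K" using K(2) by (rule subspace_0)
  have Dne: "D \<noteq> {}" using K0 by (auto simp: D_def)
  have Dbdd: "bdd_below D" unfolding D_def by (rule bdd_belowI[of _ 0]) (auto simp: Bf.nB_nonneg)
  have dle: "\<delta> \<le> Bf.nB (z - k)" if "k \<in> K" for k
    unfolding \<delta>_def using that Dbdd by (auto simp: D_def intro: cInf_lower)
  have d0: "\<delta> \<ge> 0" using dle[OF K0] Dne Dbdd unfolding \<delta>_def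
    by (intro cInf_greatest) (auto simp: D_def Bf.nB_nonneg)
  define e where "e n = 1 / (real n + 1)" for n :: nat
  have epos: "e n > 0" for n by (simp add: e_def)
  have ele1: "e n \<le> 1" for n by (simp add: e_def)
  have "\<exists>k\<in>K. Bf.nB (z - k) < \<delta> + e n" for n
  proof -
    have "Inf D < \<delta> + e n" using epos[of n] by (simp add: \<delta>_def)
    then obtain v where "v \<in> D" "v < \<delta> + e n" using cInf_lessD[OF Dne] by blast
    then show ?thesis by (auto simp: D_def)
  qed
  then obtain k where k: "\<And>n. k n \<in> K" "\<And>n. Bf.nB (z - k n) < \<delta> + e n" by metis
  have Bk: "B (z - k n) (z - k n) \<le> \<delta>^2 + (2 * \<delta> + 1) * e n" for n
  proof -
    have "Bf.nB (z - k n) \<le> \<delta> + e n" using k(2)[of n] by simp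
    then have "(Bf.nB (z - k n))^2 \<le> (\<delta> + e n)^2" by (rule power_mono) (simp add: Bf.nB_nonneg)
    also have "\<dots> = \<delta>^2 + (2 * \<delta> + e n) * e n" by (simp add: power2_eq_square algebra_simps)
    also have "\<dots> \<le> \<delta>^2 + (2 * \<delta> + 1) * e n" using ele1[of n] epos[of n] by (intro add_left_mono mult_right_mono) auto
    finally show ?thesis by (simp add: Bf.nB_sq)
  qed
  define C where "C = 2 * (2 * \<delta> + 1)"
  have C0: "C > 0" using d0 by (simp add: C_def)
  have diff_bound: "(norm (k m - k n))^2 \<le> M^2 * (C * (e m + e n))" for m n
  proof -
    define u where "u = z - k m"
    define v where "v = z - k n"
    have mid: "(1/2) *\<^sub>R (k m + k n) \<in> K"
      using K(2) k(1) by (intro subspace_scale subspace_add) auto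
    have "\<delta> \<le> Bf.nB (z - (1/2) *\<^sub>R (k m + k n))" by (rule dle[OF mid])
    then have "\<delta>^2 \<le> B (z - (1/2) *\<^sub>R (k m + k n)) (z - (1/2) *\<^sub>R (k m + k n))"
      using d0 by (metis Bf.nB_sq power_mono)
    moreover have "u + v = 2 *\<^sub>R (z - (1/2) *\<^sub>R (k m + k n))" by (simp add: u_def v_def scaleR_add_right scaleR_2 algebra_simps)
    ultimately have uv: "B (u + v) (u + v) \<ge> 4 * \<delta>^2" by (simp add: Bf.scale1 Bf.scale2)
    have "u - v = k n - k m" by (simp add: u_def v_def)
    then have "B (k n - k m) (k n - k m) = 2 * B u u + 2 * B v v - B (u + v) (u + v)"
      using Bf.parallelogram[of u v] by simp
    also have "\<dots> \<le> 2 * (\<delta>^2 + (2 * \<delta> + 1) * e m) + 2 * (\<delta>^2 + (2 * \<delta> + 1) * e n) - 4 * \<delta>^2"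
    proof -
      have "B u u \<le> \<delta>^2 + (2 * \<delta> + 1) * e m" using Bk[of m] by (simp add: u_def)
      moreover have "B v v \<le> \<delta>^2 + (2 * \<delta> + 1) * e n" using Bk[of n] by (simp add: v_def)
      ultimately show ?thesis using uv by (smt (verit))
    qed
    also have "\<dots> = C * (e m + e n)" by (simp add: C_def algebra_simps)
    finally have b1: "B (k n - k m) (k n - k m) \<le> C * (e m + e n)" .
    have "(norm (k m - k n))^2 = (norm (k n - k m))^2" by (simp add: norm_minus_commute)
    also have "\<dots> \<le> (M * Bf.nB (k n - k m))^2" by (rule power_mono[OF norm_le_nB]) simp
    also have "\<dots> = M^2 * B (k n - k m) (k n - k m)" by (simp add: power_mult_distrib Bf.nB_sq)
    also have "\<dots> \<le> M^2 * (C * (e m + e n))" using b1 M2pos by (intro mult_left_mono) auto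
    finally show ?thesis .
  qed
  have "Cauchy k"
  proof (unfold Cauchy_def, intro allI impI)
    fix r :: real assume r: "r > 0"
    define q where "q = r^2 / (2 * M^2 * C)"
    have q: "q > 0" using r C0 M2pos by (simp add: q_def)
    obtain N :: nat where N: "1 / q < real N" using reals_Archimedean2 by blast
    show "\<exists>N. \<forall>m\<ge>N. \<forall>n\<ge>N. dist (k m) (k n) < r"
    proof (intro exI allI impI)
      fix m n assume mn: "m \<ge> N" "n \<ge> N"
      have eN: "e j < q" if "j \<ge> N" for j
      proof -
        have "1 / q < real j + 1" using N that by linarith
        then show ?thesis using q by (simp add: e_def field_simps)
      qed
      have "(dist (k m) (k n))^2 \<le> M^2 * (C * (e m + e n))" by (simp add: dist_norm diff_bound)
      also have "\<dots> < M^2 * (C * (q + q))" using eN[OF mn(1)] eN[OF mn(2)] C0 M2pos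
        by (intro mult_strict_left_mono) auto
      also have "\<dots> = r^2" using C0 M2pos by (simp add: q_def field_simps)
      finally show "dist (k m) (k n) < r" using r by (meson power_less_imp_less_base less_imp_le)
    qed
  qed
  then obtain p where p: "k \<longlonglongrightarrow> p" using Cauchy_convergent convergent_def by blast
  have pK: "p \<in> K" using closed_sequentially[OF K(1)] k(1) p by blast
  have pmin: "Bf.nB (z - p) \<le> \<delta>"
  proof (rule field_le_epsilon)
    fix r :: real assume r: "r > 0"
    have "r / (2 * M) > 0" using r M1 by simp
    then obtain N1 where N1: "\<And>n. n \<ge> N1 \<Longrightarrow> norm (k n - p) < r / (2 * M)" using p LIMSEQ_D by metis
    obtain N2 :: nat where N2: "2 / r < real N2" using reals_Archimedean2 by blast
    define n where "n = max N1 N2"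
    have en: "e n < r / 2"
    proof -
      have "2 / r < real n + 1" using N2 by (simp add: n_def)
      then show ?thesis using r by (simp add: e_def field_simps)
    qed
    have "Bf.nB (z - p) \<le> Bf.nB (z - k n) + Bf.nB (k n - p)"
      using Bf.nB_triangle[of "z - k n" "k n - p"] by simp
    also have "\<dots> \<le> (\<delta> + e n) + M * norm (k n - p)"
      using k(2)[of n] nB_le_norm[of "k n - p"] by linarith
    also have "M * norm (k n - p) \<le> M * (r / (2 * M))"
      using N1[of n] M1 by (intro mult_left_mono) (auto simp: n_def)
    also have "M * (r / (2 * M)) = r / 2" using M1 by simp
    finally show "Bf.nB (z - p) \<le> \<delta> + r" using en by linarith
  qed
  have "B (z - p) k' = 0" if k': "k' \<in> K" for k'
  proof (rule Bf.orth_from_min)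
    fix t
    have "p - t *\<^sub>R k' \<in> K" using K(2) pK k' by (intro subspace_diff subspace_scale) auto
    then have "\<delta> \<le> Bf.nB (z - (p - t *\<^sub>R k'))" by (rule dle)
    then have "Bf.nB (z - p) \<le> Bf.nB (z - p + t *\<^sub>R k')" using pmin by (simp add: algebra_simps)
    then have "(Bf.nB (z - p))^2 \<le> (Bf.nB (z - p + t *\<^sub>R k'))^2" by (rule power_mono) (simp add: Bf.nB_nonneg)
    then show "B (z - p) (z - p) \<le> B (z - p + t *\<^sub>R k') (z - p + t *\<^sub>R k')" by (simp add: Bf.nB_sq)
  qed
  then show ?thesis using pK by blast
qed

end



context pbr
begin

definition Pr :: "'a set \<Rightarrow> 'a \<Rightarrow> 'a" where
  "Pr K z = (THE p. p \<in> K \<and> (\<forall>k\<in>K. B (z - p) k = 0))"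

lemma Pr_unique:
  assumes K: "subspace K" and p: "p \<in> K" "\<forall>k\<in>K. B (z - p) k = 0"
    and q: "q \<in> K" "\<forall>k\<in>K. B (z - q) k = 0"
  shows "p = q"
proof -
  have pq: "p - q \<in> K" using K p q by (simp add: subspace_diff)
  have "B (p - q) (p - q) = B (z - q) (p - q) - B (z - p) (p - q)"
    by (simp add: Bf.diff1[symmetric])
  also have "\<dots> = 0" using p q pq by simp
  finally have "p - q = 0" by (rule B_zero)
  then show ?thesis by simp
qed

lemma Pr:
  assumes K: "closed K" "subspace K"
  shows "Pr K z \<in> K" and "\<forall>k\<in>K. B (z - Pr K z) k = 0"
proof -
  have "\<exists>!p. p \<in> K \<and> (\<forall>k\<in>K. B (z - p) k = 0)"
    using proj_exists[OF K, of z] Pr_unique[OF K(2)] by blast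
  then have "Pr K z \<in> K \<and> (\<forall>k\<in>K. B (z - Pr K z) k = 0)"
    unfolding Pr_def by (rule theI')
  then show "Pr K z \<in> K" and "\<forall>k\<in>K. B (z - Pr K z) k = 0" by blast+
qed

lemma Pr_char:
  assumes K: "closed K" "subspace K" and q: "q \<in> K" "\<forall>k\<in>K. B (z - q) k = 0"
  shows "Pr K z = q"
  using Pr_unique[OF K(2) Pr[OF K, of z] q] .

lemma Pr_id: "closed K \<Longrightarrow> subspace K \<Longrightarrow> z \<in> K \<Longrightarrow> Pr K z = z"
  by (rule Pr_char) auto

lemma Pr_zero: "closed K \<Longrightarrow> subspace K \<Longrightarrow> \<forall>k\<in>K. B z k = 0 \<Longrightarrow> Pr K z = 0"
  by (rule Pr_char) (auto simp: subspace_0)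

lemma Pr_bl:
  assumes K: "closed K" "subspace K"
  shows "bounded_linear (Pr K)"
proof (rule bounded_linear_intro[where K = "M^2"])
  fix x y show "Pr K (x + y) = Pr K x + Pr K y"
  proof (rule Pr_char[OF K])
    show "Pr K x + Pr K y \<in> K" using Pr[OF K] K(2) by (simp add: subspace_add)
    show "\<forall>k\<in>K. B (x + y - (Pr K x + Pr K y)) k = 0"
    proof
      fix k assume "k \<in> K"
      have e: "x + y - (Pr K x + Pr K y) = (x - Pr K x) + (y - Pr K y)" by simp
      have "B (x - Pr K x) k = 0" "B (y - Pr K y) k = 0" using Pr(2)[OF K] \<open>k\<in>K\<close> by blast+
      then show "B (x + y - (Pr K x + Pr K y)) k = 0" unfolding e by (simp add: Bf.add1)
    qed
  qed
next
  fix r x show "Pr K (r *\<^sub>R x) = r *\<^sub>R Pr K x"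
  proof (rule Pr_char[OF K])
    show "r *\<^sub>R Pr K x \<in> K" using Pr[OF K] K(2) by (simp add: subspace_scale)
    show "\<forall>k\<in>K. B (r *\<^sub>R x - r *\<^sub>R Pr K x) k = 0"
    proof
      fix k assume "k \<in> K"
      have "r *\<^sub>R x - r *\<^sub>R Pr K x = r *\<^sub>R (x - Pr K x)" by (simp add: scaleR_diff_right)
      then show "B (r *\<^sub>R x - r *\<^sub>R Pr K x) k = 0" using Pr(2)[OF K] \<open>k\<in>K\<close> by (simp add: Bf.scale1)
    qed
  qed
next
  fix z
  define p where "p = Pr K z"
  define w where "w = z - p"
  have pK: "p \<in> K" using Pr[OF K] by (simp add: p_def)
  have "B w p = 0" using Pr(2)[OF K] pK by (simp add: w_def p_def)
  then have "B p w = 0" by (simp add: Bf.sym)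
  then have "B z z = B p p + B w w"
    using Bf.expand[of p 1 w] by (simp add: w_def)
  then have "B p p \<le> B z z" using Bf.pos[of w] by linarith
  then have "Bf.nB p \<le> Bf.nB z" by (simp add: Bf.nB_def)
  then have "norm p \<le> M * (M * norm z)"
    using norm_le_nB[of p] nB_le_norm[of z] M1 by (meson mult_left_mono order_trans less_le_trans zero_less_one less_imp_le)
  then show "norm (Pr K z) \<le> norm z * M^2" by (simp add: p_def power2_eq_square algebra_simps)
qed

lemma Pr_T:
  assumes K: "closed K" "subspace K" and inv: "T ` K \<subseteq> K" "Ti ` K \<subseteq> K"
  shows "Pr K (T z) = T (Pr K z)"
proof (rule Pr_char[OF K])
  show "T (Pr K z) \<in> K" using Pr[OF K] inv by blast
  show "\<forall>k\<in>K. B (T z - T (Pr K z)) k = 0"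
  proof
    fix k assume k: "k \<in> K"
    have "B (T z - T (Pr K z)) k = B (T (z - Pr K z)) (T (Ti k))" by (simp add: T.diff)
    also have "\<dots> = B (z - Pr K z) (Ti k)" by (rule B_T)
    also have "\<dots> = 0" using Pr(2)[OF K] inv k by blast
    finally show "B (T z - T (Pr K z)) k = 0" .
  qed
qed

definition Hl :: "'a set \<Rightarrow> 'a set" where
  "Hl F = \<Inter>{S. closed S \<and> subspace S \<and> F \<subseteq> S \<and> T ` S \<subseteq> S \<and> Ti ` S \<subseteq> S}"

lemma Hl_closed: "closed (Hl F)"
  unfolding Hl_def by (rule closed_Inter) auto

lemma Hl_subspace: "subspace (Hl F)"
  unfolding Hl_def by (rule subspace_Inter) auto

lemma Hl_sup: "F \<subseteq> Hl F"
  unfolding Hl_def by auto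

lemma Hl_T: "T ` Hl F \<subseteq> Hl F"
  unfolding Hl_def by blast

lemma Hl_Ti: "Ti ` Hl F \<subseteq> Hl F"
  unfolding Hl_def by blast

lemma Hl_min: "closed S \<Longrightarrow> subspace S \<Longrightarrow> F \<subseteq> S \<Longrightarrow> T ` S \<subseteq> S \<Longrightarrow> Ti ` S \<subseteq> S \<Longrightarrow> Hl F \<subseteq> S"
  unfolding Hl_def by blast

lemma Hl_mono: "F \<subseteq> G \<Longrightarrow> Hl F \<subseteq> Hl G"
  using Hl_sup[of G] by (intro Hl_min Hl_closed Hl_subspace Hl_T Hl_Ti) auto

end



context pbr
begin

lemma approx_step: "norm ((T^^n) l - l) \<le> (M + 1) * norm (l - s) + norm ((T^^n) s - s)"
proof -
  have eq: "(T^^n) l - l = (T^^n) (l - s) + ((T^^n) s - s) + (s - l)" by (simp add: Tn_diff)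
  have "norm ((T^^n) l - l) \<le> norm ((T^^n) (l - s)) + norm ((T^^n) s - s) + norm (s - l)"
    unfolding eq using norm_triangle_ineq[of "(T^^n) (l - s) + ((T^^n) s - s)" "s - l"]
      norm_triangle_ineq[of "(T^^n) (l - s)" "(T^^n) s - s"] by linarith
  also have "\<dots> \<le> M * norm (l - s) + norm ((T^^n) s - s) + norm (s - l)" using Mb by simp
  also have "\<dots> = (M + 1) * norm (l - s) + norm ((T^^n) s - s)" by (simp add: norm_minus_commute algebra_simps)
  finally show ?thesis .
qed

lemma Lset_closed: "closed (Lset T \<omega>)"
proof (unfold closed_sequential_limits, intro allI impI)
  fix s l assume a: "(\<forall>n. s n \<in> Lset T \<omega>) \<and> s \<longlonglongrightarrow> l"
  show "l \<in> Lset T \<omega>" unfolding Lset_def mem_Collect_eq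
  proof (rule LIMSEQ_I)
    fix r :: real assume r: "r > 0"
    have "r / (2 * (M + 1)) > 0" using r M1 by simp
    then obtain j where j: "norm (s j - l) < r / (2 * (M + 1))" using a LIMSEQ_D by blast
    have "(\<lambda>n. (T ^^ \<omega> n) (s j)) \<longlonglongrightarrow> s j" using a by (simp add: Lset_def)
    then obtain N where N: "\<And>n. n \<ge> N \<Longrightarrow> norm ((T ^^ \<omega> n) (s j) - s j) < r / 2"
      using r LIMSEQ_D[of _ "s j" "r/2"] by auto
    show "\<exists>no. \<forall>n\<ge>no. norm ((T ^^ \<omega> n) l - l) < r"
    proof (intro exI allI impI)
      fix n assume "n \<ge> N"
      have "norm ((T ^^ \<omega> n) l - l) \<le> (M + 1) * norm (l - s j) + norm ((T ^^ \<omega> n) (s j) - s j)"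
        by (rule approx_step)
      also have "(M + 1) * norm (l - s j) \<le> (M + 1) * (r / (2 * (M + 1)))"
        using j M1 by (intro mult_left_mono) (auto simp: norm_minus_commute)
      also have "(M + 1) * (r / (2 * (M + 1))) = r / 2" using M1 by (simp add: field_simps)
      finally show "norm ((T ^^ \<omega> n) l - l) < r" using N[OF \<open>n \<ge> N\<close>] by linarith
    qed
  qed
qed

lemma Lset_subspace: "subspace (Lset T \<omega>)"
  unfolding subspace_def
proof (intro conjI ballI allI)
  show "0 \<in> Lset T \<omega>" using Tn_bl by (simp add: Lset_def linear_simps)
next
  fix x y assume "x \<in> Lset T \<omega>" "y \<in> Lset T \<omega>"
  then show "x + y \<in> Lset T \<omega>" by (simp add: Lset_def Tn_add tendsto_add)
next
  fix c x assume "x \<in> Lset T \<omega>"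
  then show "c *\<^sub>R x \<in> Lset T \<omega>" by (simp add: Lset_def Tn_scale tendsto_scaleR)
qed

lemma comm_pow: "(\<And>x. A (T x) = T (A x)) \<Longrightarrow> A ((T^^n) x) = (T^^n) (A x)"
  by (induction n) auto

lemma Lset_comm:
  assumes "bounded_linear A" "\<And>x. A (T x) = T (A x)" "x \<in> Lset T \<omega>"
  shows "A x \<in> Lset T \<omega>"
proof -
  have "(\<lambda>n. A ((T ^^ \<omega> n) x)) \<longlonglongrightarrow> A x"
    using assms(3) unfolding Lset_def by (auto intro: bounded_linear.tendsto[OF assms(1)])
  then show ?thesis unfolding Lset_def using comm_pow[of A, OF assms(2)] by simp
qed

lemma Ti_comm: "Ti (T x) = T (Ti x)" by simp

end



context pbr
begin

lemma main_approx:
  fixes d :: "nat \<Rightarrow> 'a"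
  assumes d: "closure (range d) = UNIV" and e: "\<epsilon> > 0"
  shows "\<exists>x. dist x y \<le> \<epsilon> \<and> (\<forall>\<omega>. x \<in> Lset T \<omega> \<longrightarrow> Lset T \<omega> = UNIV)"
proof -
  define K where "K n = Hl (insert y (d ` {..<n}))" for n
  have Kc: "closed (K n)" and Ks: "subspace (K n)" and KT: "T ` K n \<subseteq> K n" and KTi: "Ti ` K n \<subseteq> K n" for n
    by (simp_all add: K_def Hl_closed Hl_subspace Hl_T Hl_Ti)
  have Kmono: "K m \<subseteq> K n" if "m \<le> n" for m n
    unfolding K_def using that by (intro Hl_mono) auto
  have yK: "y \<in> K n" for n using Hl_sup[of "insert y (d ` {..<n})"] by (auto simp: K_def)
  have dK: "d n \<in> K (Suc n)" for n using Hl_sup[of "insert y (d ` {..<Suc n})"] by (auto simp: K_def)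
  define P where "P n = Pr (K n)" for n
  have Pbl: "bounded_linear (P n)" for n unfolding P_def by (rule Pr_bl[OF Kc Ks])
  have PK: "P n z \<in> K n" for n z unfolding P_def by (rule Pr(1)[OF Kc Ks])
  have Porth: "\<forall>k\<in>K n. B (z - P n z) k = 0" for n z unfolding P_def by (rule Pr(2)[OF Kc Ks])
  have Pid: "z \<in> K n \<Longrightarrow> P n z = z" for n z unfolding P_def by (rule Pr_id[OF Kc Ks])
  have Pzero: "\<forall>k\<in>K n. B z k = 0 \<Longrightarrow> P n z = 0" for n z unfolding P_def by (rule Pr_zero[OF Kc Ks])
  have PT: "P n (T z) = T (P n z)" for n z unfolding P_def by (rule Pr_T[OF Kc Ks KT KTi])
  define w where "w n = d n - P n (d n)" for n
  have worth: "\<forall>k\<in>K n. B (w n) k = 0" for n using Porth by (simp add: w_def)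
  have wK: "w n \<in> K (Suc n)" for n
    using dK[of n] PK[of n "d n"] Kmono[of n "Suc n"] Ks[of "Suc n"] by (auto simp: w_def intro: subspace_diff)
  define c where "c n = \<epsilon> / (2 ^ Suc n * (norm (w n) + 1))" for n
  have cpos: "c n > 0" for n using e by (simp add: c_def add_nonneg_pos)
  define f where "f n = c n *\<^sub>R w n" for n
  define h where "h n = (\<epsilon> / 2) * (1/2) ^ n" for n :: nat
  have fh: "norm (f n) \<le> h n" for n
  proof -
    have "norm (f n) = \<epsilon> / 2 ^ Suc n * (norm (w n) / (norm (w n) + 1))"
      using cpos[of n] e by (simp add: f_def c_def)
    also have "\<dots> \<le> \<epsilon> / 2 ^ Suc n * 1"
      using e by (intro mult_left_mono) (auto simp: divide_le_eq_1 add_nonneg_pos)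
    also have "\<dots> = h n" by (simp add: h_def power_divide)
    finally show ?thesis .
  qed
  have hs: "summable h" unfolding h_def by (intro summable_mult summable_geometric) simp
  have hsum: "suminf h = \<epsilon>" unfolding h_def by (subst suminf_mult) (simp_all add: suminf_geometric)
  have fs: "summable f" by (rule summable_comparison_test[OF _ hs]) (use fh in auto)
  have fns: "summable (\<lambda>n. norm (f n))" by (rule summable_comparison_test[OF _ hs]) (use fh in auto)
  have "norm (suminf f) \<le> (\<Sum>n. norm (f n))" by (rule summable_norm[OF fns])
  also have "\<dots> \<le> suminf h" by (rule suminf_le[OF fh fns hs])
  finally have fsmall: "norm (suminf f) \<le> \<epsilon>" using hsum by simp
  define x where "x = y + suminf f"
  have dist: "dist x y \<le> \<epsilon>" using fsmall by (simp add: x_def dist_norm)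
  have Px: "P 0 x = y"
  proof -
    have "P 0 (f n) = 0" for n
    proof -
      have "P 0 (w n) = 0" using worth[of n] Kmono[of 0 n] by (intro Pzero) auto
      then show ?thesis using Pbl[of 0] by (simp add: f_def linear_simps)
    qed
    moreover have "P 0 (suminf f) = (\<Sum>n. P 0 (f n))" by (rule bounded_linear.suminf[OF Pbl fs])
    ultimately show ?thesis using Pbl[of 0] Pid[OF yK[of 0]] by (simp add: x_def linear_simps)
  qed
  define Q where "Q m z = P (Suc m) z - P m z" for m z
  have Qbl: "bounded_linear (Q m)" for m unfolding Q_def by (intro bounded_linear_sub Pbl)
  have Qf: "Q m (f n) = (if n = m then f n else 0)" for m n
  proof -
    have "Q m (w n) = (if n = m then w n else 0)"
    proof (cases "n < m")
      case True
      then have "w n \<in> K m" using wK[of n] Kmono[of "Suc n" m] by auto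
      then have "w n \<in> K (Suc m)" using Kmono[of m "Suc m"] by auto
      then show ?thesis using True Pid \<open>w n \<in> K m\<close> by (simp add: Q_def)
    next
      case False
      show ?thesis
      proof (cases "n = m")
        case True
        then show ?thesis using Pid[OF wK[of m]] Pzero[OF worth[of m]] by (simp add: Q_def)
      next
        case False
        then have "Suc m \<le> n" using \<open>\<not> n < m\<close> by simp
        then have "P (Suc m) (w n) = 0" "P m (w n) = 0"
          using worth[of n] Kmono[of "Suc m" n] Kmono[of m n] by (auto intro!: Pzero)
        then show ?thesis using False by (simp add: Q_def)
      qed
    qed
    then show ?thesis using Qbl[of m] by (simp add: f_def linear_simps)
  qed
  have Qx: "Q m x = c m *\<^sub>R w m" for m
  proof -
    have "Q m (suminf f) = (\<Sum>n. Q m (f n))" by (rule bounded_linear.suminf[OF Qbl fs])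
    also have "\<dots> = (\<Sum>n. if n = m then f n else 0)" by (simp add: Qf)
    also have "\<dots> = f m" by (rule sums_unique[symmetric, OF sums_single])
    finally have "Q m (suminf f) = f m" .
    moreover have "Q m y = 0" using Pid[OF yK] by (simp add: Q_def)
    ultimately show ?thesis using Qbl[of m] by (simp add: x_def f_def linear_simps)
  qed
  have QT: "Q m (T z) = T (Q m z)" for m z by (simp add: Q_def PT T.diff)
  have "Lset T \<omega> = UNIV" if xS: "x \<in> Lset T \<omega>" for \<omega>
  proof -
    let ?S = "Lset T \<omega>"
    have Sc: "closed ?S" and Ss: "subspace ?S" by (rule Lset_closed, rule Lset_subspace)
    have ST: "T ` ?S \<subseteq> ?S" using Lset_comm[OF T_bl] by auto
    have STi: "Ti ` ?S \<subseteq> ?S" using Lset_comm[OF Ti_bl Ti_comm] by auto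
    have yS: "y \<in> ?S" using Lset_comm[OF Pbl PT xS, of 0] Px by simp
    have wS: "w m \<in> ?S" for m
    proof -
      have "c m *\<^sub>R w m \<in> ?S" using Lset_comm[OF Qbl QT xS, of m] Qx by simp
      then have "(1 / c m) *\<^sub>R (c m *\<^sub>R w m) \<in> ?S" by (rule subspace_scale[OF Ss])
      then show ?thesis using cpos[of m] by simp
    qed
    have "d ` {..<n} \<subseteq> ?S" for n
    proof (induction n)
      case 0 then show ?case by simp
    next
      case (Suc n)
      have "K n \<subseteq> ?S" unfolding K_def using Suc yS by (intro Hl_min Sc Ss ST STi) auto
      then have "P n (d n) \<in> ?S" using PK by blast
      then have "P n (d n) + w n \<in> ?S" using wS Ss by (simp add: subspace_add)
      then have "d n \<in> ?S" by (simp add: w_def)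
      then show ?case using Suc by (auto simp: lessThan_Suc)
    qed
    then have "range d \<subseteq> ?S" by blast
    then have "closure (range d) \<subseteq> ?S" using Sc by (rule closure_minimal)
    then show ?thesis using d by auto
  qed
  then show ?thesis using dist by blast
qed

end



theorem theorem5p2:
  fixes sc :: "complex \<Rightarrow> 'a::banach \<Rightarrow> 'a"
    and ip :: "'a \<Rightarrow> 'a \<Rightarrow> complex"
    and T :: "'a \<Rightarrow> 'a"
  assumes "complex_hilbert sc ip"
    and "separable_type TYPE('a)"
    and "complex_bounded_operator sc T"
    and "power_bounded T"
    and "recurrent T"
  shows "hyper_recurrent T \<and> closure (Hr T) = UNIV"
proof -
  have HH: "(\<forall>r x. sc (complex_of_real r) x = r *\<^sub>R x) \<and>
     (\<forall>a b x. sc (a * b) x = sc a (sc b x)) \<and>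
     (\<forall>a b x. sc (a + b) x = sc a x + sc b x) \<and>
     (\<forall>a x y. sc a (x + y) = sc a x + sc a y) \<and>
     (\<forall>x y z. ip (x + y) z = ip x z + ip y z) \<and>
     (\<forall>a x y. ip (sc a x) y = a * ip x y) \<and>
     (\<forall>x y. ip y x = cnj (ip x y)) \<and>
     (\<forall>x. ip x x \<in> \<real> \<and> Re (ip x x) \<ge> 0) \<and>
     (\<forall>x. ip x x = 0 \<longrightarrow> x = 0) \<and>
     (\<forall>x. norm x = sqrt (Re (ip x x)))"
    using assms(1) unfolding complex_hilbert_def .
  have H1: "\<And>r x. sc (complex_of_real r) x = r *\<^sub>R x" using HH[THEN conjunct1] by blast
  have H5: "\<And>x y z. ip (x + y) z = ip x z + ip y z" using HH[THEN conjunct2, THEN conjunct2, THEN conjunct2, THEN conjunct2, THEN conjunct1] by blast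
  have H6: "\<And>a x y. ip (sc a x) y = a * ip x y" using HH[THEN conjunct2, THEN conjunct2, THEN conjunct2, THEN conjunct2, THEN conjunct2, THEN conjunct1] by blast
  have H7: "\<And>x y. ip y x = cnj (ip x y)" using HH[THEN conjunct2, THEN conjunct2, THEN conjunct2, THEN conjunct2, THEN conjunct2, THEN conjunct2, THEN conjunct1] by blast
  have H8: "\<And>x. ip x x \<in> \<real> \<and> Re (ip x x) \<ge> 0" using HH[THEN conjunct2, THEN conjunct2, THEN conjunct2, THEN conjunct2, THEN conjunct2, THEN conjunct2, THEN conjunct2, THEN conjunct1] by blast
  have H10: "\<And>x. norm x = sqrt (Re (ip x x))" using HH[THEN conjunct2, THEN conjunct2, THEN conjunct2, THEN conjunct2, THEN conjunct2, THEN conjunct2, THEN conjunct2, THEN conjunct2, THEN conjunct2] by blast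
  define g where "g x y = Re (ip x y)" for x y
  have g_add: "g (x + y) z = g x z + g y z" for x y z by (simp add: g_def H5)
  have g_scale: "g (r *\<^sub>R x) y = r * g x y" for r x y
    using H6[of "complex_of_real r" x y] by (simp add: g_def H1)
  have g_sym: "g x y = g y x" for x y using H7[of x y] by (simp add: g_def)
  have g_norm: "g x x = (norm x)^2" for x using H8[of x] H10[of x] by (simp add: g_def)
  have Tbl: "bounded_linear T" using assms(3) by (simp add: complex_bounded_operator_def)
  have Tnbl: "bounded_linear (T^^n)" for n
    by (induction n) (auto simp: bounded_linear_ident[unfolded id_def] intro: bounded_linear_compose[OF Tbl])
  obtain M0 where M0: "\<And>n. onorm (T^^n) \<le> M0" using assms(4) by (auto simp: power_bounded_def)
  define M where "M = max M0 1"
  have Mb: "norm ((T^^n) x) \<le> M * norm x" for n x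
  proof -
    have "norm ((T^^n) x) \<le> onorm (T^^n) * norm x" by (rule onorm[OF Tnbl])
    also have "\<dots> \<le> M * norm x" using M0[of n] by (intro mult_right_mono) (auto simp: M_def)
    finally show ?thesis .
  qed
  have recd: "closure (Rec T) = UNIV" using assms(5) by (simp add: recurrent_def)
  interpret P: pbr g T M
    by (rule pbr.intro) (rule g_add, rule g_scale, rule g_sym, rule g_norm, rule Tbl, simp add: M_def, rule Mb, rule recd)
  obtain D :: "'a set" where D: "countable D" "closure D = UNIV"
    using assms(2) by (auto simp: separable_type_def)
  have Dne: "D \<noteq> {}" using D(2) by auto
  define d where "d = from_nat_into D"
  have d: "closure (range d) = UNIV" using D Dne by (simp add: d_def range_from_nat_into)
  have cl: "closure (Hr T) = UNIV"
  proof -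
    have "y \<in> closure (Hr T)" for y
    proof (unfold closure_approachable, intro allI impI)
      fix e :: real assume e: "e > 0"
      obtain x where x: "dist x y \<le> e / 2" "\<forall>\<omega>. x \<in> Lset T \<omega> \<longrightarrow> Lset T \<omega> = UNIV"
        using P.main_approx[OF d, of "e/2" y] e by auto
      have "x \<in> Hr T" unfolding Hr_def using P.Rec_UNIV x(2) by auto
      moreover have "dist x y < e" using x(1) e by simp
      ultimately show "\<exists>x\<in>Hr T. dist x y < e" by blast
    qed
    then show ?thesis by auto
  qed
  moreover have "Hr T \<noteq> {}" using cl by auto
  ultimately show ?thesis using assms(5) by (simp add: hyper_recurrent_def)
qed


end
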